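(* For all positive integers $k$, $$\sum_{n\ge0}\big|\mathcal A_{2n}^{(k)}\big|\,x^{2n+1}=(-1)^k\frac{x}{U_{2k}(x/2)}.$$
   Context: For integers $n\ge0$ and $k\ge1$, $\mathcal A_n^{(k)}$ is the set of all integer sequences $(a_1,\dots,a_n)$ with $1\le a_i\le k$ for all $i$ and $a_1\le a_2\ge a_3\le a_4\ge\cdots$ (i.e. $a_{2j-1}\le a_{2j}$ and $a_{2j}\ge a_{2j+1}$ whenever defined); $\mathcal A_0^{(k)}$ consists of the empty sequence only. $U_n$ is the Chebyshev polynomial of the second kind ($U_0=1$, $U_1(x)=2x$, $U_{n+1}(x)=2xU_n(x)-U_{n-1}(x)$). *)

theory Defs
  imports "HOL-Computational_Algebra.Formal_Power_Series"
begin

text \<open>Alternating sequences a_1 <= a_2 >= a_3 <= a_4 ... of length n with entries in {1..k},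
  represented as lists (0-based: position i even means xs!i <= xs!(i+1), odd means >=).\<close>
definition alt_seqs :: "nat \<Rightarrow> nat \<Rightarrow> nat list set" where
  "alt_seqs n k = {xs. length xs = n \<and> (\<forall>i<n. 1 \<le> xs ! i \<and> xs ! i \<le> k) \<and>
     (\<forall>i. i + 1 < n \<longrightarrow> (if even i then xs ! i \<le> xs ! (i+1) else xs ! i \<ge> xs ! (i+1)))}"

fun cheb_U :: "nat \<Rightarrow> 'a::comm_ring_1 \<Rightarrow> 'a" where
  "cheb_U 0 x = 1"
| "cheb_U (Suc 0) x = 2 * x"
| "cheb_U (Suc (Suc n)) x = 2 * x * cheb_U (Suc n) x - cheb_U n x"

end

theory Submission imports Defs begin

lemma finite_alt: "finite (alt_seqs m k)"
proof -
  have "alt_seqs m k \<subseteq> {xs. set xs \<subseteq> {1..k} \<and> length xs = m}"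
    by (auto simp: alt_seqs_def in_set_conv_nth)
  moreover have "finite {xs. set xs \<subseteq> {1..k} \<and> length xs = m}"
    by (rule finite_lists_length_eq) simp
  ultimately show ?thesis by (rule finite_subset)
qed

lemma alt_snoc:
  "xs @ [a] \<in> alt_seqs (Suc m) k \<longleftrightarrow> xs \<in> alt_seqs m k \<and> 1 \<le> a \<and> a \<le> k \<and>
     (m = 0 \<or> (if even (m - 1) then last xs \<le> a else a \<le> last xs))"
proof
  assume H: "xs @ [a] \<in> alt_seqs (Suc m) k"
  hence len: "length xs = m" by (simp add: alt_seqs_def)
  from H have r: "\<And>i. i < Suc m \<Longrightarrow> 1 \<le> (xs@[a]) ! i \<and> (xs@[a]) ! i \<le> k"
    and c: "\<And>i. i + 1 < Suc m \<Longrightarrow> (if even i then (xs@[a]) ! i \<le> (xs@[a]) ! (i+1) else (xs@[a]) ! i \<ge> (xs@[a]) ! (i+1))"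
    by (auto simp: alt_seqs_def)
  have "xs \<in> alt_seqs m k"
    unfolding alt_seqs_def
  proof (intro CollectI conjI allI impI len)
    fix i assume "i < m"
    with r[of i] len show "1 \<le> xs ! i" "xs ! i \<le> k" by (auto simp: nth_append)
  next
    fix i assume "i + 1 < m"
    with c[of i] len show "if even i then xs ! i \<le> xs ! (i+1) else xs ! i \<ge> xs ! (i+1)"
      by (auto simp: nth_append split: if_splits)
  qed
  moreover have "1 \<le> a \<and> a \<le> k" using r[of m] len by (simp add: nth_append)
  moreover have "m = 0 \<or> (if even (m - 1) then last xs \<le> a else a \<le> last xs)"
  proof (cases m)
    case (Suc j)
    have "last xs = xs ! j" using len Suc by (metis diff_Suc_1 last_conv_nth list.size(3) nat.distinct(1))
    with c[of j] len Suc show ?thesis by (auto simp: nth_append split: if_splits)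
  qed simp
  ultimately show "xs \<in> alt_seqs m k \<and> 1 \<le> a \<and> a \<le> k \<and>
     (m = 0 \<or> (if even (m - 1) then last xs \<le> a else a \<le> last xs))" by blast
next
  assume H: "xs \<in> alt_seqs m k \<and> 1 \<le> a \<and> a \<le> k \<and>
     (m = 0 \<or> (if even (m - 1) then last xs \<le> a else a \<le> last xs))"
  hence len: "length xs = m" and r: "\<And>i. i < m \<Longrightarrow> 1 \<le> xs ! i \<and> xs ! i \<le> k"
    and c: "\<And>i. i + 1 < m \<Longrightarrow> (if even i then xs ! i \<le> xs ! (i+1) else xs ! i \<ge> xs ! (i+1))"
    and a: "1 \<le> a" "a \<le> k"
    and l: "m = 0 \<or> (if even (m - 1) then last xs \<le> a else a \<le> last xs)"
    by (auto simp: alt_seqs_def)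
  show "xs @ [a] \<in> alt_seqs (Suc m) k"
    unfolding alt_seqs_def
  proof (intro CollectI conjI allI impI)
    show "length (xs @ [a]) = Suc m" using len by simp
  next
    fix i assume "i < Suc m"
    hence "i < m \<or> i = m" by auto
    thus "1 \<le> (xs @ [a]) ! i" "(xs @ [a]) ! i \<le> k" using r[of i] a len by (auto simp: nth_append)
  next
    fix i assume i: "i + 1 < Suc m"
    show "if even i then (xs @ [a]) ! i \<le> (xs @ [a]) ! (i+1) else (xs @ [a]) ! i \<ge> (xs @ [a]) ! (i+1)"
    proof (cases "i + 1 < m")
      case True thus ?thesis using c[of i] len by (auto simp: nth_append)
    next
      case False
      hence im: "i + 1 = m" using i by simp
      hence "last xs = xs ! i" using len by (metis Suc_eq_plus1 diff_Suc_1 last_conv_nth list.size(3) nat.distinct(1))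
      thus ?thesis using l im len by (auto simp: nth_append)
    qed
  qed
qed

definition E :: "nat \<Rightarrow> nat \<Rightarrow> nat \<Rightarrow> nat" where
  "E k m t = card {xs \<in> alt_seqs m k. last xs = t}"

lemma alt_last_range: assumes "xs \<in> alt_seqs (Suc m) k" shows "last xs \<in> {1..k}"
proof -
  have len: "length xs = Suc m" using assms by (simp add: alt_seqs_def)
  hence "last xs = xs ! m" by (metis diff_Suc_1 last_conv_nth list.size(3) nat.distinct(1))
  thus ?thesis using assms by (auto simp: alt_seqs_def)
qed

lemma card_fib:
  assumes "m \<ge> 1"
  shows "card {xs \<in> alt_seqs m k. P (last xs)} = (\<Sum>t\<in>{t\<in>{1..k}. P t}. E k m t)"
proof -
  obtain j where m: "m = Suc j" using assms by (cases m) auto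
  let ?S = "{xs \<in> alt_seqs m k. P (last xs)}"
  have fS: "finite ?S" using finite_alt by simp
  have "last ` ?S \<subseteq> {t\<in>{1..k}. P t}" using alt_last_range m by blast
  from sum.group[OF fS _ this, of "\<lambda>_. 1::nat"]
  have "(\<Sum>y\<in>{t\<in>{1..k}. P t}. card {x \<in> ?S. last x = y}) = card ?S"
    by simp
  moreover have "\<And>y. y \<in> {t\<in>{1..k}. P t} \<Longrightarrow> {x \<in> ?S. last x = y} = {xs \<in> alt_seqs m k. last xs = y}"
    by auto
  ultimately show ?thesis unfolding E_def by (metis (no_types, lifting) sum.cong)
qed

lemma E_step:
  assumes "m \<ge> 1" "1 \<le> a" "a \<le> k"
  shows "E k (Suc m) a = card {xs \<in> alt_seqs m k. if even (m - 1) then last xs \<le> a else a \<le> last xs}"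
proof -
  define C where "C = (\<lambda>xs. if even (m - 1) then last xs \<le> a else a \<le> last xs)"
  let ?T = "{xs \<in> alt_seqs m k. C xs}"
  have m0: "m \<noteq> 0" using assms by simp
  have iff: "\<And>xs. xs @ [a] \<in> alt_seqs (Suc m) k \<longleftrightarrow> xs \<in> alt_seqs m k \<and> C xs"
    using alt_snoc[of _ a m k] assms m0 unfolding C_def by blast
  have "{ys \<in> alt_seqs (Suc m) k. last ys = a} = (\<lambda>xs. xs @ [a]) ` ?T"
  proof
    show "{ys \<in> alt_seqs (Suc m) k. last ys = a} \<subseteq> (\<lambda>xs. xs @ [a]) ` ?T"
    proof
      fix ys assume ys: "ys \<in> {ys \<in> alt_seqs (Suc m) k. last ys = a}"
      hence yA: "ys \<in> alt_seqs (Suc m) k" and la: "last ys = a" by auto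
      from yA have "length ys = Suc m" by (simp add: alt_seqs_def)
      hence ne: "ys \<noteq> []" by auto
      have eq: "ys = butlast ys @ [a]" using append_butlast_last_id[OF ne] la by simp
      have "butlast ys @ [a] \<in> alt_seqs (Suc m) k" using yA eq by simp
      hence "butlast ys \<in> ?T" using iff by blast
      thus "ys \<in> (\<lambda>xs. xs @ [a]) ` ?T" using eq by blast
    qed
  next
    show "(\<lambda>xs. xs @ [a]) ` ?T \<subseteq> {ys \<in> alt_seqs (Suc m) k. last ys = a}"
      using iff by auto
  qed
  moreover have "inj_on (\<lambda>xs. xs @ [a]) ?T" by (auto simp: inj_on_def)
  ultimately show ?thesis unfolding E_def C_def by (simp add: card_image)
qed

lemma E1: assumes "1 \<le> t" "t \<le> k" shows "E k 1 t = 1"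
proof -
  have "{xs \<in> alt_seqs 1 k. last xs = t} = {[t]}"
  proof
    show "{xs \<in> alt_seqs 1 k. last xs = t} \<subseteq> {[t]}"
    proof
      fix ys assume ys: "ys \<in> {xs \<in> alt_seqs 1 k. last xs = t}"
      hence "length ys = 1" by (auto simp: alt_seqs_def)
      then obtain y where "ys = [y]" by (metis One_nat_def length_0_conv length_Suc_conv)
      thus "ys \<in> {[t]}" using ys by simp
    qed
  next
    show "{[t]} \<subseteq> {xs \<in> alt_seqs 1 k. last xs = t}" using assms by (auto simp: alt_seqs_def)
  qed
  thus ?thesis unfolding E_def by simp
qed

lemma card_alt0: "card (alt_seqs 0 k) = 1"
proof -
  have "alt_seqs 0 k = {[]}" by (auto simp: alt_seqs_def)
  thus ?thesis by simp
qed

lemma card_altS: "card (alt_seqs (Suc m) k) = (\<Sum>t=1..k. E k (Suc m) t)"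
proof -
  have "{t\<in>{1..k}. True} = {1..k}" by auto
  with card_fib[of "Suc m" k "\<lambda>_. True"] show ?thesis by simp
qed

lemma E_even: assumes "1 \<le> b" "b \<le> k"
  shows "E k (2*n+2) b = (\<Sum>t=1..b. E k (2*n+1) t)"
proof -
  have "E k (2*n+2) b = card {xs \<in> alt_seqs (2*n+1) k. last xs \<le> b}"
    using E_step[of "2*n+1" b k] assms by simp
  also have "\<dots> = (\<Sum>t\<in>{t\<in>{1..k}. t \<le> b}. E k (2*n+1) t)" by (rule card_fib) simp
  also have "{t\<in>{1..k}. t \<le> b} = {1..b}" using assms by auto
  finally show ?thesis .
qed

lemma O_rec: assumes "1 \<le> c" "c \<le> k"
  shows "E k (2*n+3) c = (\<Sum>b=c..k. \<Sum>t=1..b. E k (2*n+1) t)"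
proof -
  have "E k (2*n+3) c = card {xs \<in> alt_seqs (2*n+2) k. c \<le> last xs}"
    using E_step[of "2*n+2" c k] assms by (simp add: numeral_3_eq_3)
  also have "\<dots> = (\<Sum>b\<in>{b\<in>{1..k}. c \<le> b}. E k (2*n+2) b)" by (rule card_fib) simp
  also have "{b\<in>{1..k}. c \<le> b} = {c..k}" using assms by auto
  also have "(\<Sum>b=c..k. E k (2*n+2) b) = (\<Sum>b=c..k. \<Sum>t=1..b. E k (2*n+1) t)"
    using E_even assms by (intro sum.cong) auto
  finally show ?thesis .
qed

lemma card_even: "card (alt_seqs (2*n+2) k) = (\<Sum>b=1..k. \<Sum>t=1..b. E k (2*n+1) t)"
proof -
  have "card (alt_seqs (2*n+2) k) = (\<Sum>b=1..k. E k (2*n+2) b)"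
    using card_altS[of "2*n+1" k] by simp
  also have "\<dots> = (\<Sum>b=1..k. \<Sum>t=1..b. E k (2*n+1) t)"
    using E_even by (intro sum.cong) auto
  finally show ?thesis .
qed


fun Q :: "nat \<Rightarrow> real fps" where
  "Q 0 = 0"
| "Q (Suc j) = cheb_U j (fps_const (1/2) * fps_X)"

lemma two_half: "2 * (fps_const (1/2) * fps_X) = (fps_X :: real fps)"
proof -
  have "(2::real fps) * fps_const (1/2) = fps_const (2 * (1/2))"
    by (metis fps_const_mult numeral_fps_const)
  thus ?thesis by (simp add: mult.assoc[symmetric])
qed

lemma Q_rec: "Q (Suc (Suc j)) = fps_X * Q (Suc j) - Q j"
proof (cases j)
  case 0 thus ?thesis using two_half by simp
next
  case (Suc i) thus ?thesis using two_half by (simp add: mult.assoc[symmetric])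
qed

definition Xo :: "nat \<Rightarrow> nat \<Rightarrow> real fps" where
  "Xo k c = Abs_fps (\<lambda>m. if odd m then of_nat (E k m c) else 0)"

definition Ye :: "nat \<Rightarrow> nat \<Rightarrow> real fps" where
  "Ye k b = Abs_fps (\<lambda>m. if even m \<and> m \<noteq> 0 then of_nat (\<Sum>t=1..b. E k (m - 1) t) else 0)"

lemma odd_cases: "odd (m::nat) \<Longrightarrow> m = 1 \<or> (\<exists>n. m = 2*n+3)"
proof -
  assume "odd m"
  then obtain j where m: "m = 2*j+1" using oddE by blast
  show ?thesis
  proof (cases j)
    case 0 thus ?thesis using m by simp
  next
    case (Suc n) thus ?thesis using m by auto
  qed
qed

lemma Ye0: "Ye k 0 = 0"
  by (simp add: Ye_def fps_eq_iff)

lemma Ye_step: "Ye k (Suc b) = Ye k b + fps_X * Xo k (Suc b)"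
proof (rule fps_ext)
  fix m
  show "fps_nth (Ye k (Suc b)) m = fps_nth (Ye k b + fps_X * Xo k (Suc b)) m"
  proof (cases "even m \<and> m \<noteq> 0")
    case True thus ?thesis by (simp add: Ye_def Xo_def)
  next
    case False thus ?thesis by (auto simp: Ye_def Xo_def)
  qed
qed

lemma A_eq: assumes "k \<ge> 1"
  shows "Abs_fps (\<lambda>m. if odd m then of_nat (card (alt_seqs (m - 1) k)) else 0) = Xo k 1"
proof (rule fps_ext)
  fix m
  show "fps_nth (Abs_fps (\<lambda>m. if odd m then of_nat (card (alt_seqs (m - 1) k)) else 0)) m = fps_nth (Xo k 1) m"
  proof (cases "odd m")
    case True
    then consider "m = 1" | n where "m = 2*n+3" using odd_cases by blast
    thus ?thesis
    proof cases
      case 1 thus ?thesis using assms E1[of 1 k] by (simp add: Xo_def card_alt0)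
    next
      case 2
      have "card (alt_seqs (2*n+2) k) = E k (2*n+3) 1" using card_even O_rec[of 1 k n] assms by simp
      thus ?thesis using 2 by (simp add: Xo_def)
    qed
  next
    case False thus ?thesis by (simp add: Xo_def)
  qed
qed

lemma Xo_step: assumes "1 \<le> c" "c < k"
  shows "Xo k c = Xo k (Suc c) + fps_X * Ye k c"
proof (rule fps_ext)
  fix m
  show "fps_nth (Xo k c) m = fps_nth (Xo k (Suc c) + fps_X * Ye k c) m"
  proof (cases "odd m")
    case True
    then consider "m = 1" | n where "m = 2*n+3" using odd_cases by blast
    thus ?thesis
    proof cases
      case 1 thus ?thesis using assms E1[of c k] E1[of "Suc c" k] by (simp add: Xo_def Ye_def)
    next
      case 2
      have "E k (2*n+3) c = E k (2*n+3) (Suc c) + (\<Sum>t=1..c. E k (2*n+1) t)"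
        using O_rec[of c k n] O_rec[of "Suc c" k n] assms by (simp add: sum.atLeast_Suc_atMost)
      thus ?thesis using 2 by (simp add: Xo_def Ye_def)
    qed
  next
    case False thus ?thesis by (auto simp: Xo_def Ye_def)
  qed
qed

lemma Xo_last: assumes "1 \<le> k"
  shows "Xo k k = fps_X + fps_X * Ye k k"
proof (rule fps_ext)
  fix m
  show "fps_nth (Xo k k) m = fps_nth (fps_X + fps_X * Ye k k) m"
  proof (cases "odd m")
    case True
    then consider "m = 1" | n where "m = 2*n+3" using odd_cases by blast
    thus ?thesis
    proof cases
      case 1 thus ?thesis using assms E1[of k k] by (simp add: Xo_def Ye_def fps_X_def)
    next
      case 2
      have "E k (2*n+3) k = (\<Sum>t=1..k. E k (2*n+1) t)"
        using O_rec[of k k n] assms by simp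
      thus ?thesis using 2 by (simp add: Xo_def Ye_def)
    qed
  next
    case False thus ?thesis by (auto simp: Xo_def Ye_def)
  qed
qed


lemma main_ind:
  assumes "b \<le> k"
  shows "Ye k b = fps_const ((-1)^(b+1)) * Xo k 1 * Q (2*b) \<and>
         (b < k \<longrightarrow> Xo k (Suc b) = fps_const ((-1)^b) * Xo k 1 * Q (2*b+1))"
  using assms
proof (induction b)
  case 0 thus ?case by (simp add: Ye0)
next
  case (Suc b)
  hence bk: "b < k" by simp
  with Suc.IH have IH1: "Ye k b = fps_const ((-1)^(b+1)) * Xo k 1 * Q (2*b)"
    and IH2: "Xo k (Suc b) = fps_const ((-1)^b) * Xo k 1 * Q (2*b+1)" by auto
  define c where "c = fps_const ((-1::real)^b)"
  define A where "A = Xo k 1"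
  have s1: "fps_const ((-1::real)^(Suc b)) = - c" unfolding c_def by simp
  have s2: "fps_const ((-1::real)^(Suc b + 1)) = c" unfolding c_def by simp
  have q1: "Q (2 * Suc b) = fps_X * Q (2*b+1) - Q (2*b)"
    using Q_rec[of "2*b"] by simp
  have q2: "Q (2 * Suc b + 1) = fps_X * Q (2 * Suc b) - Q (2*b+1)"
    using Q_rec[of "2*b+1"] by simp
  have Y: "Ye k (Suc b) = c * A * Q (2 * Suc b)"
  proof -
    have "Ye k (Suc b) = Ye k b + fps_X * Xo k (Suc b)" by (rule Ye_step)
    also have "\<dots> = - c * A * Q (2*b) + fps_X * (c * A * Q (2*b+1))"
      using IH1 IH2 s1 unfolding A_def c_def by simp
    also have "\<dots> = c * A * Q (2 * Suc b)" unfolding q1 by (simp add: algebra_simps)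
    finally show ?thesis .
  qed
  moreover have "Suc b < k \<longrightarrow> Xo k (Suc (Suc b)) = - c * A * Q (2 * Suc b + 1)"
  proof
    assume "Suc b < k"
    hence "Xo k (Suc b) = Xo k (Suc (Suc b)) + fps_X * Ye k (Suc b)" by (intro Xo_step) auto
    hence "Xo k (Suc (Suc b)) = Xo k (Suc b) - fps_X * Ye k (Suc b)" by simp
    also have "\<dots> = c * A * Q (2*b+1) - fps_X * (c * A * Q (2 * Suc b))"
      using IH2 Y unfolding A_def c_def by simp
    also have "\<dots> = - c * A * Q (2 * Suc b + 1)" unfolding q2 by (simp add: algebra_simps)
    finally show "Xo k (Suc (Suc b)) = - c * A * Q (2 * Suc b + 1)" .
  qed
  ultimately show ?case using s1 s2 unfolding A_def by simp
qed

lemma cheb0': "fps_nth x 0 = 0 \<Longrightarrow> fps_nth (cheb_U n (x :: real fps)) 0 = (if even n then (-1)^(n div 2) else 0)"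
  by (induction n x rule: cheb_U.induct) (auto simp: mult.assoc)

lemma cheb0: "fps_nth (cheb_U n (fps_const (1/2) * fps_X :: real fps)) 0 = (if even n then (-1)^(n div 2) else 0)"
  by (rule cheb0') simp

theorem corollary10:
  fixes k :: nat
  assumes "k \<ge> 1"
  shows "Abs_fps (\<lambda>m. if odd m then of_nat (card (alt_seqs (m - 1) k)) else 0)
       = fps_const ((-1) ^ k) * fps_X / cheb_U (2 * k) (fps_const (1/2) * fps_X :: real fps)"
proof -
  obtain j where kj: "k = Suc j" using assms by (cases k) auto
  define A where "A = Xo k 1"
  define c where "c = fps_const ((-1::real)^j)"
  define P where "P = cheb_U (2 * k) (fps_const (1/2) * fps_X :: real fps)"
  have PQ: "P = Q (2*k+1)" unfolding P_def by simp
  have h1: "Xo k k = c * A * Q (2*j+1)"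
    using main_ind[of j k] kj unfolding A_def c_def by simp
  have h2: "Ye k k = c * A * Q (2*k)"
    using main_ind[of k k] kj unfolding A_def c_def by simp
  have q: "Q (2*k+1) = fps_X * Q (2*k) - Q (2*j+1)"
    using Q_rec[of "2*j+1"] kj by simp
  have "c * A * Q (2*j+1) = fps_X + fps_X * (c * A * Q (2*k))"
    using Xo_last[of k] assms h1 h2 by simp
  hence "c * A * Q (2*k+1) = - fps_X" unfolding q by (simp add: algebra_simps del: Q.simps)
  moreover have "fps_const ((-1)^k) = - c" unfolding c_def kj by simp
  ultimately have key: "fps_const ((-1)^k) * A * P = fps_X"
    unfolding PQ by (simp del: Q.simps)
  have P0: "fps_nth P 0 \<noteq> 0" unfolding P_def by (simp add: cheb0)
  have "fps_const ((-1)^k) * fps_X / P = fps_const ((-1)^k) * fps_X * inverse P"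
    using P0 by (simp add: fps_divide_unit)
  also have "\<dots> = fps_const ((-1)^k) * (fps_const ((-1)^k) * A * P) * inverse P"
    unfolding key ..
  also have "\<dots> = fps_const (((-1)^k) * ((-1)^k)) * A * (P * inverse P)"
    by (simp add: algebra_simps)
  also have "\<dots> = A" using P0 by (simp add: inverse_mult_eq_1' power_mult_distrib[symmetric])
  finally show ?thesis using A_eq[OF assms] unfolding A_def P_def by simp
qed

end
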